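(* Let $(N,C,\mathbf{A},k)$ be an instance with $|N|=n$ having at least one cohesive group, and let $c_{\max}$ be its maximum EJR degree. For every $\lambda\in[0,\frac{n}{k^2})$ satisfying $n>k(k+1)(c_{\max}-1)+\lambda k^2$, every committee output by $\lambda$-LS-PAV (from any initial committee) has EJR degree $c_{\max}$.
   Context: An instance consists of voters $N=\{1,\dots,n\}$, candidates $C$, approval ballots $A_i\subseteq C$ for $i\in N$, and a committee size $k$ with $1\le k\le|C|$. For $\ell\in\mathbb{N}$, $N'\subseteq N$ is an $\ell$-cohesive group if $|N'|\ge\ell n/k$ and $|\bigcap_{i\in N'}A_i|\ge\ell$ (a cohesive group is a $1$-cohesive group). A size-$k$ committee $W$ achieves EJR degree $c$ if for every $\ell\in\{1,\dots,k\}$ every $\ell$-cohesive group contains at least $c$ voters $i$ with $|A_i\cap W|\ge\ell$; its EJR degree is the largest such $c$, and the maximum EJR degree of the instance is the maximum over all size-$k$ committees. The PAV-score of $W$ is $s_{\mathrm{PAV}}(W)=\sum_{i=1}^n\sum_{j=1}^{|A_i\cap W|}\frac1j$, and $\Delta(W,c^+,c^-)=s_{\mathrm{PAV}}((W\setminus\{c^-\})\cup\{c^+\})-s_{\mathrm{PAV}}(W)$. The algorithm $\lambda$-LS-PAV starts from an arbitrary size-$k$ committee $W$ and, while there exist $c^+\notin W$ and $c^-\in W$ with $\Delta(W,c^+,c^-)\ge\lambda$, replaces $W$ by $(W\setminus\{c^-\})\cup\{c^+\}$; it then outputs $W$. *)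

theory Defs
  imports Complex_Main
begin

definition valid_instance :: "nat \<Rightarrow> 'c set \<Rightarrow> (nat \<Rightarrow> 'c set) \<Rightarrow> nat \<Rightarrow> bool" where
  "valid_instance n C A k \<longleftrightarrow> finite C \<and> (\<forall>i\<in>{1..n}. A i \<subseteq> C) \<and> 1 \<le> k \<and> k \<le> card C"

definition committee :: "'c set \<Rightarrow> nat \<Rightarrow> 'c set \<Rightarrow> bool" where
  "committee C k W \<longleftrightarrow> W \<subseteq> C \<and> card W = k"

definition cohesive_group :: "nat \<Rightarrow> (nat \<Rightarrow> 'c set) \<Rightarrow> nat \<Rightarrow> nat \<Rightarrow> nat set \<Rightarrow> bool" where
  "cohesive_group n A k l N' \<longleftrightarrow>
     N' \<subseteq> {1..n} \<and> N' \<noteq> {} \<and>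
     real (card N') \<ge> real l * real n / real k \<and>
     card (\<Inter>i\<in>N'. A i) \<ge> l"

definition achieves_ejr_degree :: "nat \<Rightarrow> (nat \<Rightarrow> 'c set) \<Rightarrow> nat \<Rightarrow> 'c set \<Rightarrow> nat \<Rightarrow> bool" where
  "achieves_ejr_degree n A k W c \<longleftrightarrow>
     (\<forall>l\<in>{1..k}. \<forall>N'. cohesive_group n A k l N' \<longrightarrow>
        card {i\<in>N'. card (A i \<inter> W) \<ge> l} \<ge> c)"

definition ejr_degree :: "nat \<Rightarrow> (nat \<Rightarrow> 'c set) \<Rightarrow> nat \<Rightarrow> 'c set \<Rightarrow> nat" where
  "ejr_degree n A k W = (GREATEST c. achieves_ejr_degree n A k W c)"

definition max_ejr_degree :: "nat \<Rightarrow> 'c set \<Rightarrow> (nat \<Rightarrow> 'c set) \<Rightarrow> nat \<Rightarrow> nat" where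
  "max_ejr_degree n C A k = Max {ejr_degree n A k W | W. committee C k W}"

definition pav_score :: "nat \<Rightarrow> (nat \<Rightarrow> 'c set) \<Rightarrow> 'c set \<Rightarrow> real" where
  "pav_score n A W = (\<Sum>i\<in>{1..n}. \<Sum>j\<in>{1..card (A i \<inter> W)}. 1 / real j)"

definition swap_gain :: "nat \<Rightarrow> (nat \<Rightarrow> 'c set) \<Rightarrow> 'c set \<Rightarrow> 'c \<Rightarrow> 'c \<Rightarrow> real" where
  "swap_gain n A W cp cm = pav_score n A ((W - {cm}) \<union> {cp}) - pav_score n A W"

definition ls_pav_step :: "nat \<Rightarrow> 'c set \<Rightarrow> (nat \<Rightarrow> 'c set) \<Rightarrow> real \<Rightarrow> 'c set \<Rightarrow> 'c set \<Rightarrow> bool" where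
  "ls_pav_step n C A lam W W' \<longleftrightarrow>
     (\<exists>cp\<in>C - W. \<exists>cm\<in>W. swap_gain n A W cp cm \<ge> lam \<and> W' = (W - {cm}) \<union> {cp})"

definition ls_pav_output :: "nat \<Rightarrow> 'c set \<Rightarrow> (nat \<Rightarrow> 'c set) \<Rightarrow> nat \<Rightarrow> real \<Rightarrow> 'c set \<Rightarrow> bool" where
  "ls_pav_output n C A k lam W \<longleftrightarrow>
     (\<exists>W0. committee C k W0 \<and> (ls_pav_step n C A lam)\<^sup>*\<^sup>* W0 W) \<and>
     \<not> (\<exists>W'. ls_pav_step n C A lam W W')"

end

theory Submission
  imports Defs
begin

definition Hn :: "nat \<Rightarrow> real" where
  "Hn m = (\<Sum>j\<in>{1..m}. 1 / real j)"

lemma Hn_Suc: "Hn (Suc m) = Hn m + 1 / real (Suc m)"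
  unfolding Hn_def by (simp add: atLeastAtMostSuc_conv add.commute)

lemma pav_Hn: "pav_score n A W = (\<Sum>i\<in>{1..n}. Hn (card (A i \<inter> W)))"
  unfolding pav_score_def Hn_def by simp

lemma voter_sum:
  fixes W B :: "'c set"
  assumes fin: "finite W" and cW: "c \<notin> W"
  shows "(\<Sum>cm\<in>W. Hn (card (B \<inter> (W - {cm} \<union> {c}))) - Hn (card (B \<inter> W))) =
    (if c \<in> B then real (card W - card (B \<inter> W)) / real (card (B \<inter> W) + 1)
     else (if card (B \<inter> W) = 0 then 0 else -1))"
proof -
  let ?t = "card (B \<inter> W)"
  let ?f = "\<lambda>cm. Hn (card (B \<inter> (W - {cm} \<union> {c}))) - Hn ?t"
  have finB: "finite (B \<inter> W)" using fin by simp
  have split: "sum ?f W = sum ?f (W \<inter> B) + sum ?f (W - B)"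
    using fin by (metis Int_Diff_Un Int_Diff_disjoint finite_Diff finite_Int sum.union_disjoint)
  have cardWB: "card (W - B) = card W - ?t"
    using fin by (metis Diff_Int2 Int_commute card_Diff_subset_Int finite_Int inf.idem inf_le2 card_Diff_subset)
  show ?thesis
  proof (cases "c \<in> B")
    case True
    have a: "\<And>cm. cm \<in> W \<inter> B \<Longrightarrow> ?f cm = 0"
    proof -
      fix cm assume cm: "cm \<in> W \<inter> B"
      have "B \<inter> (W - {cm} \<union> {c}) = insert c (B \<inter> W - {cm})" using True by auto
      moreover have "card (insert c (B \<inter> W - {cm})) = ?t"
      proof -
        have "?t > 0" using cm finB card_gt_0_iff by blast
        then show ?thesis using cW cm finB by simp
      qed
      ultimately show "?f cm = 0" by simp
    qed
    have b: "\<And>cm. cm \<in> W - B \<Longrightarrow> ?f cm = 1 / real (?t + 1)"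
    proof -
      fix cm assume cm: "cm \<in> W - B"
      have "B \<inter> (W - {cm} \<union> {c}) = insert c (B \<inter> W)" using True cm by auto
      moreover have "card (insert c (B \<inter> W)) = Suc ?t" using cW finB by simp
      ultimately show "?f cm = 1 / real (?t + 1)" by (simp add: Hn_Suc)
    qed
    have "sum ?f W = real (card (W - B)) * (1 / real (?t + 1))"
      using split a b by simp
    then show ?thesis using True cardWB by simp
  next
    case False
    have a: "\<And>cm. cm \<in> W \<inter> B \<Longrightarrow> ?f cm = - 1 / real ?t"
    proof -
      fix cm assume cm: "cm \<in> W \<inter> B"
      have "B \<inter> (W - {cm} \<union> {c}) = B \<inter> W - {cm}" using False by auto
      moreover have "card (B \<inter> W - {cm}) = ?t - 1" using cm finB by simp
      moreover have "?t > 0" using cm finB card_gt_0_iff by blast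
      then have "?t = Suc (?t - 1)" by simp
      then have "Hn ?t = Hn (?t - 1) + 1 / real ?t" using Hn_Suc by metis
      ultimately show "?f cm = - 1 / real ?t" by simp
    qed
    have b: "\<And>cm. cm \<in> W - B \<Longrightarrow> ?f cm = 0"
    proof -
      fix cm assume cm: "cm \<in> W - B"
      have "B \<inter> (W - {cm} \<union> {c}) = B \<inter> W" using False cm by auto
      then show "?f cm = 0" by simp
    qed
    have "sum ?f W = real (card (W \<inter> B)) * (- 1 / real ?t)"
      using split a b by simp
    then show ?thesis using False by (simp add: Int_commute)
  qed
qed


lemma step_committee:
  assumes "ls_pav_step n C A lam W W'" "committee C k W" "finite C"
  shows "committee C k W'"
proof -
  obtain cp cm where cp: "cp \<in> C - W" and cm: "cm \<in> W" and W': "W' = (W - {cm}) \<union> {cp}"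
    using assms(1) unfolding ls_pav_step_def by blast
  have fW: "finite W" using assms(2,3) unfolding committee_def using finite_subset by blast
  have c1: "card W' = Suc (card (W - {cm}))" using W' cp fW by simp
  have c2: "card (W - {cm}) = card W - 1" using cm by (simp add: card_Diff_singleton)
  have c3: "card W > 0" using cm fW card_gt_0_iff by blast
  have "card W' = card W" using c1 c2 c3 by simp
  moreover have "W' \<subseteq> C" using W' cp cm assms(2) unfolding committee_def by blast
  ultimately show ?thesis using assms(2) unfolding committee_def by simp
qed

lemma reach_committee:
  assumes "(ls_pav_step n C A lam)\<^sup>*\<^sup>* W0 W" "committee C k W0" "finite C"
  shows "committee C k W"
  using assms by (induction rule: rtranclp_induct) (auto intro: step_committee)

lemma achieves_bound:
  assumes "cohesive_group n A k 1 N'" "1 \<le> k" "achieves_ejr_degree n A k W c"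
  shows "c \<le> n"
proof -
  have "c \<le> card {i\<in>N'. card (A i \<inter> W) \<ge> 1}"
    using assms unfolding achieves_ejr_degree_def by auto
  also have "\<dots> \<le> card N'"
  proof -
    have "N' \<subseteq> {1..n}" using assms(1) unfolding cohesive_group_def by blast
    then have "finite N'" using finite_subset by blast
    then show ?thesis by (intro card_mono) auto
  qed
  also have "\<dots> \<le> card {1..n}" using assms(1) unfolding cohesive_group_def
    by (intro card_mono) auto
  also have "\<dots> = n" by simp
  finally show ?thesis .
qed

lemma ejr_degree_props:
  assumes "cohesive_group n A k 1 N'" "1 \<le> k"
  shows "achieves_ejr_degree n A k W (ejr_degree n A k W)"
    and "achieves_ejr_degree n A k W c \<Longrightarrow> c \<le> ejr_degree n A k W"
proof -
  have z: "achieves_ejr_degree n A k W 0" unfolding achieves_ejr_degree_def by simp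
  have b: "\<And>c. achieves_ejr_degree n A k W c \<Longrightarrow> c \<le> n" using achieves_bound assms by blast
  show "achieves_ejr_degree n A k W (ejr_degree n A k W)"
    unfolding ejr_degree_def by (rule GreatestI_nat[where P="achieves_ejr_degree n A k W", OF z]) (use b in blast)
  show "achieves_ejr_degree n A k W c \<Longrightarrow> c \<le> ejr_degree n A k W"
    unfolding ejr_degree_def by (rule Greatest_le_nat[where P="achieves_ejr_degree n A k W"]) (use b in blast)+
qed

theorem proposition5:
  fixes n :: nat and C :: "'c set" and A :: "nat \<Rightarrow> 'c set" and k :: nat
    and lam :: real and W :: "'c set"
  assumes "valid_instance n C A k"
    and "\<exists>N'. cohesive_group n A k 1 N'"
    and "0 \<le> lam" and "lam < real n / (real k)^2"
    and "real n > real k * (real k + 1) * (real (max_ejr_degree n C A k) - 1) + lam * (real k)^2"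
    and "ls_pav_output n C A k lam W"
  shows "ejr_degree n A k W = max_ejr_degree n C A k"
proof -
  have finC: "finite C" and k1: "1 \<le> k" and AC: "\<And>i. i \<in> {1..n} \<Longrightarrow> A i \<subseteq> C"
    using assms(1) unfolding valid_instance_def by auto
  obtain N1 where N1: "cohesive_group n A k 1 N1" using assms(2) by blast
  obtain W0 where W0: "committee C k W0" "(ls_pav_step n C A lam)\<^sup>*\<^sup>* W0 W"
    and nostep: "\<not> (\<exists>W'. ls_pav_step n C A lam W W')"
    using assms(6) unfolding ls_pav_output_def by blast
  have comW: "committee C k W" using reach_committee W0 finC by blast
  have fW: "finite W" and cardW: "card W = k" and WC: "W \<subseteq> C"
    using comW finC unfolding committee_def by (auto intro: finite_subset)
  define S where "S = {ejr_degree n A k W | W. committee C k W}"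
  define cmax where "cmax = max_ejr_degree n C A k"
  have finS: "finite S"
  proof -
    have "S \<subseteq> (\<lambda>W. ejr_degree n A k W) ` Pow C" unfolding S_def committee_def by auto
    then show ?thesis using finC finite_subset by blast
  qed
  have WS: "ejr_degree n A k W \<in> S" unfolding S_def using comW by blast
  have cmaxS: "cmax = Max S" unfolding cmax_def max_ejr_degree_def S_def by simp
  have le: "ejr_degree n A k W \<le> cmax" using cmaxS finS WS by simp
  have "cmax \<in> S" using cmaxS finS WS Max_in by blast
  then obtain Ws where Ws: "committee C k Ws" "ejr_degree n A k Ws = cmax" unfolding S_def by blast
  have achWs: "achieves_ejr_degree n A k Ws cmax" using ejr_degree_props(1)[OF N1 k1] Ws by metis
  have key: "achieves_ejr_degree n A k W cmax"
    unfolding achieves_ejr_degree_def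
  proof (intro ballI allI impI)
    fix l N' assume l: "l \<in> {1..k}" and coh: "cohesive_group n A k l N'"
    have N'sub: "N' \<subseteq> {1..n}" and N'ne: "N' \<noteq> {}"
      and N'size: "real (card N') \<ge> real l * real n / real k"
      and Isize: "card (\<Inter>i\<in>N'. A i) \<ge> l" using coh unfolding cohesive_group_def by auto
    have finN': "finite N'" using N'sub finite_subset by blast
    define s where "s = card {i\<in>N'. card (A i \<inter> W) \<ge> l}"
    show "cmax \<le> card {i\<in>N'. card (A i \<inter> W) \<ge> l}"
    proof (rule ccontr)
      assume "\<not> ?thesis"
      then have slt: "s < cmax" unfolding s_def by simp
      have "cmax \<le> card {i\<in>N'. card (A i \<inter> Ws) \<ge> l}"
        using achWs l coh unfolding achieves_ejr_degree_def by blast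
      also have "\<dots> \<le> card N'" using finN' by (intro card_mono) auto
      finally have cN': "cmax \<le> card N'" .
      define I where "I = (\<Inter>i\<in>N'. A i)"
      obtain i0 where i0: "i0 \<in> N'" using N'ne by blast
      have IC: "I \<subseteq> C" unfolding I_def using i0 N'sub AC by blast
      have finI: "finite I" using IC finC finite_subset by blast
      have "\<exists>c. c \<in> I - W"
      proof (rule ccontr)
        assume "\<not> ?thesis"
        then have IW: "I \<subseteq> W" by blast
        have "\<And>i. i \<in> N' \<Longrightarrow> l \<le> card (A i \<inter> W)"
        proof -
          fix i assume i: "i \<in> N'"
          have "I \<subseteq> A i \<inter> W" using IW i unfolding I_def by blast
          then have "card I \<le> card (A i \<inter> W)" using fW by (intro card_mono) auto
          then show "l \<le> card (A i \<inter> W)" using Isize unfolding I_def by simp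
        qed
        then have "{i\<in>N'. card (A i \<inter> W) \<ge> l} = N'" by blast
        then show False using slt cN' unfolding s_def by simp
      qed
      then obtain c where cI: "c \<in> I" and cW: "c \<notin> W" by blast
      have cC: "c \<in> C" using cI IC by blast
      have cA: "\<And>i. i \<in> N' \<Longrightarrow> c \<in> A i" using cI unfolding I_def by blast
      define U where "U = {i\<in>N'. \<not> l \<le> card (A i \<inter> W)}"
      have cardU: "real (card U) + real s = real (card N')"
      proof -
        have e: "N' = {i\<in>N'. \<not> l \<le> card (A i \<inter> W)} \<union> {i\<in>N'. l \<le> card (A i \<inter> W)}" by blast
        have "card N' = card {i\<in>N'. \<not> l \<le> card (A i \<inter> W)} + card {i\<in>N'. l \<le> card (A i \<inter> W)}"
          using finN' by (subst e, subst card_Un_disjoint) auto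
        then have "card U + s = card N'" unfolding U_def s_def by simp
        then show ?thesis by linarith
      qed
      define v where "v i = (\<Sum>cm\<in>W. Hn (card (A i \<inter> (W - {cm} \<union> {c}))) - Hn (card (A i \<inter> W)))" for i
      have vb: "v i \<ge> (if i \<in> U then (real k + 1) / real l else 0) - 1" if i: "i \<in> {1..n}" for i
      proof -
        let ?t = "card (A i \<inter> W)"
        have tk: "?t \<le> k" using cardW fW by (metis card_mono inf_le2)
        have vi: "v i = (if c \<in> A i then real (k - ?t) / real (?t + 1) else (if ?t = 0 then 0 else -1))"
          unfolding v_def using voter_sum[OF fW cW, of "A i"] cardW by simp
        show ?thesis
        proof (cases "i \<in> U")
          case True
          then have ci: "c \<in> A i" and tl: "?t + 1 \<le> l" using cA unfolding U_def by auto
          have "real (k - ?t) / real (?t + 1) = (real k + 1) / real (?t + 1) - 1"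
            using tk by (simp add: field_simps of_nat_diff)
          also have "\<dots> \<ge> (real k + 1) / real l - 1"
            using tl by (intro diff_right_mono divide_left_mono) auto
          finally show ?thesis using vi ci True by simp
        next
          case False
          have "v i \<ge> -1" using vi by (auto intro: order_trans[of _ 0])
          then show ?thesis using False by simp
        qed
      qed
      have sumgain: "(\<Sum>cm\<in>W. swap_gain n A W c cm) = (\<Sum>i\<in>{1..n}. v i)"
      proof -
        have "\<And>cm. swap_gain n A W c cm = (\<Sum>i\<in>{1..n}. Hn (card (A i \<inter> (W - {cm} \<union> {c}))) - Hn (card (A i \<inter> W)))"
          unfolding swap_gain_def pav_Hn by (simp only: sum_subtractf)
        then have "(\<Sum>cm\<in>W. swap_gain n A W c cm) = (\<Sum>cm\<in>W. \<Sum>i\<in>{1..n}. Hn (card (A i \<inter> (W - {cm} \<union> {c}))) - Hn (card (A i \<inter> W)))"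
          by (intro sum.cong) auto
        also have "\<dots> = (\<Sum>i\<in>{1..n}. v i)" unfolding v_def by (rule sum.swap)
        finally show ?thesis .
      qed
      have "(\<Sum>i\<in>{1..n}. v i) \<ge> (\<Sum>i\<in>{1..n}. (if i \<in> U then (real k + 1) / real l else 0) - 1)"
        using vb by (intro sum_mono) auto
      also have "(\<Sum>i\<in>{1..n}. (if i \<in> U then (real k + 1) / real l else 0) - 1)
          = real (card U) * ((real k + 1) / real l) - real n"
      proof -
        have "U \<subseteq> {1..n}" using N'sub unfolding U_def by blast
        then have "{1..n} \<inter> U = U" by blast
        have "(\<Sum>i\<in>{1..n}. (if i \<in> U then (real k + 1) / real l else 0)) = (\<Sum>i\<in>{1..n} \<inter> U. (real k + 1) / real l)"
          by (rule sum.inter_restrict[symmetric]) simp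
        also have "\<dots> = real (card U) * ((real k + 1) / real l)" using \<open>{1..n} \<inter> U = U\<close> by simp
        finally show ?thesis by (simp only: sum_subtractf) simp
      qed
      finally have sv: "(\<Sum>i\<in>{1..n}. v i) \<ge> real (card U) * ((real k + 1) / real l) - real n" .
      have "real (card U) * ((real k + 1) / real l) - real n > lam * real k"
      proof -
        have kp: "real k > 0" using k1 by simp
        have lp: "real l \<ge> 1" using l by simp
        have sc: "real s \<le> real cmax - 1" using slt by linarith
        have X: "real (card U) \<ge> real l * real n / real k - real s" using cardU N'size by linarith
        have h1: "real (card U) * ((real k + 1) / real l) \<ge> (real l * real n / real k - real s) * ((real k + 1) / real l)"
          using X lp by (intro mult_right_mono) auto
        have h2: "(real l * real n / real k - real s) * ((real k + 1) / real l)
            = real n + real n / real k - real s * (real k + 1) / real l"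
          using kp lp by (simp add: field_simps)
        have h3: "real s * (real k + 1) / real l \<le> real s * (real k + 1)"
        proof -
          have "real s * (real k + 1) * 1 \<le> real s * (real k + 1) * real l"
            by (rule mult_left_mono) (use lp in auto)
          then show ?thesis using lp by (simp add: pos_divide_le_eq)
        qed
        have h5: "real s * (real k + 1) \<le> (real cmax - 1) * (real k + 1)"
          using sc by (intro mult_right_mono) auto
        have a5: "real n > real k * (real k + 1) * (real cmax - 1) + lam * (real k)^2"
          using assms(5) unfolding cmax_def .
        have h6: "real n / real k > (real k + 1) * (real cmax - 1) + lam * real k"
          using a5 kp by (simp add: field_simps power2_eq_square)
        show ?thesis using h1 h2 h3 h5 h6 by (simp add: algebra_simps)
      qed
      then have big: "(\<Sum>cm\<in>W. swap_gain n A W c cm) > (\<Sum>cm\<in>W. lam)"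
      proof -
        have "(\<Sum>cm\<in>W. lam) = lam * real k" using cardW by simp
        then show ?thesis using sv sumgain \<open>real (card U) * ((real k + 1) / real l) - real n > lam * real k\<close> by linarith
      qed
      have "\<exists>cm\<in>W. swap_gain n A W c cm \<ge> lam"
      proof (rule ccontr)
        assume "\<not> ?thesis"
        then have "(\<Sum>cm\<in>W. swap_gain n A W c cm) \<le> (\<Sum>cm\<in>W. lam)"
          by (intro sum_mono) auto
        then show False using big by simp
      qed
      then obtain cm where "cm \<in> W" "swap_gain n A W c cm \<ge> lam" by blast
      then have "ls_pav_step n C A lam W ((W - {cm}) \<union> {c})"
        unfolding ls_pav_step_def using cC cW by blast
      then show False using nostep by blast
    qed
  qed
  have "cmax \<le> ejr_degree n A k W" using ejr_degree_props(2)[OF N1 k1 key] .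
  then show ?thesis using le cmax_def by simp
qed

end
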